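(* Let $\mathcal{T}=(X,\mathcal{B},\mathcal{G})$ be a $\mathrm{TD}_\lambda(\ell,s)$ and let $q=p^e$ with $p$ prime. If $p\nmid \lambda s$, then $$\mathrm{Code}_q(\mathcal{T})\subseteq\{c\in\mathbb{F}_q^{X}:\ \text{for every } G\in\mathcal{G},\ c_{|G}\in\mathrm{Rep}(s)\},$$ where $\mathrm{Rep}(s)$ is the repetition code of length $s$ (i.e. $c$ is constant on each group). In particular, if $p\nmid\lambda s$ then $\dim_{\mathbb{F}_q}\mathrm{Code}_q(\mathcal{T})\le\ell$.
   Context: A transversal design $\mathrm{TD}_\lambda(\ell,s)$ ($s,\ell\ge2$, $\lambda\ge1$) is a triple $(X,\mathcal{B},\mathcal{G})$ where $X$ is a finite set of points, $\mathcal{B}$ a collection of subsets of $X$ (blocks), and $\mathcal{G}=\{G_1,\dots,G_\ell\}$ a partition of $X$ (groups) such that $|X|=\ell s$, every group has size $s$, every block has size $\ell$, and every unordered pair of distinct points of $X$ is contained either in one group and no block, or in no group and exactly $\lambda$ blocks. For a block design $(X,\mathcal{B})$, $\mathrm{Code}_q$ of the design is the $\mathbb{F}_q$-linear code $\{c\in\mathbb{F}_q^X:\ \sum_{x\in B}c_x=0\ \forall B\in\mathcal{B}\}$. For $c\in\mathbb{F}_q^X$ and $T\subseteq X$, $c_{|T}=(c_t)_{t\in T}$. *)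

theory Defs
  imports Complex_Main "HOL-Library.Multiset" "HOL-Library.Disjoint_Sets" "HOL-Library.FuncSet" "HOL-Library.Function_Algebras"
          "HOL-Computational_Algebra.Primes"
begin

definition transversal_design ::
  "nat \<Rightarrow> nat \<Rightarrow> nat \<Rightarrow> 'x set \<Rightarrow> 'x set multiset \<Rightarrow> 'x set set \<Rightarrow> bool" where
  "transversal_design lam l s X B G \<longleftrightarrow>
     s \<ge> 2 \<and> l \<ge> 2 \<and> lam \<ge> 1 \<and>
     finite X \<and> card X = l * s \<and>
     partition_on X G \<and> card G = l \<and> (\<forall>g\<in>G. card g = s) \<and>
     (\<forall>b\<in>#B. b \<subseteq> X \<and> card b = l) \<and>
     (\<forall>x\<in>X. \<forall>y\<in>X. x \<noteq> y \<longrightarrow>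
        ((\<exists>g\<in>G. x \<in> g \<and> y \<in> g) \<and> size (filter_mset (\<lambda>b. x \<in> b \<and> y \<in> b) B) = 0) \<or>
        (\<not> (\<exists>g\<in>G. x \<in> g \<and> y \<in> g) \<and> size (filter_mset (\<lambda>b. x \<in> b \<and> y \<in> b) B) = lam))"

text \<open>F_q^X is represented as functions vanishing outside X.\<close>
definition design_code :: "'x set \<Rightarrow> 'x set multiset \<Rightarrow> ('x \<Rightarrow> 'a::field) set" where
  "design_code X B = {c. (\<forall>x. x \<notin> X \<longrightarrow> c x = 0) \<and> (\<forall>b\<in>#B. (\<Sum>x\<in>b. c x) = 0)}"

definition rep_code :: "'x set \<Rightarrow> ('x \<Rightarrow> 'a) set" where
  "rep_code T = {v \<in> extensional T. \<exists>a. \<forall>t\<in>T. v t = a}"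

abbreviation fscale :: "'a::field \<Rightarrow> ('x \<Rightarrow> 'a) \<Rightarrow> ('x \<Rightarrow> 'a)" where
  "fscale c f \<equiv> (\<lambda>x. c * f x)"

end

theory Submission imports Defs "HOL-Number_Theory.Residues" "HOL-Computational_Algebra.Euclidean_Algorithm" begin

lemma char_ok:
  assumes "prime p" "card (UNIV :: 'a::{field,finite} set) = p ^ e" "\<not> p dvd n"
  shows "(of_nat n :: 'a) \<noteq> 0"
proof
  assume h: "(of_nat n :: 'a) = 0"
  have pos: "CHAR('a) > 0" by (simp add: finite_imp_CHAR_pos)
  hence pr: "prime CHAR('a)" by (rule prime_CHAR_semidom)
  have "CHAR('a) dvd p ^ e" using CHAR_dvd_CARD[where 'a='a] assms(2) by simp
  hence "CHAR('a) dvd p" using pr prime_dvd_power by blast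
  hence "CHAR('a) = p" using pr assms(1) by (simp add: primes_dvd_imp_eq)
  moreover have "CHAR('a) dvd n" using h of_nat_eq_0_iff_char_dvd by blast
  ultimately show False using assms(3) by simp
qed

lemma swap_count:
  fixes f :: "'x \<Rightarrow> 'b::comm_semiring_1"
  assumes "\<forall>b\<in>#B. b \<subseteq> X" "finite X"
  shows "(\<Sum>b\<in>#B. \<Sum>z\<in>b. f z) = (\<Sum>z\<in>X. of_nat (size (filter_mset (\<lambda>b. z \<in> b) B)) * f z)"
  using assms(1)
proof (induction B)
  case empty
  then show ?case by simp
next
  case (add b B)
  have bX: "b \<subseteq> X" using add.prems by simp
  have "(\<Sum>z\<in>b. f z) = (\<Sum>z\<in>X. (if z \<in> b then 1 else 0) * f z)"
  proof -
    have "(\<Sum>z\<in>X. (if z \<in> b then 1 else 0) * f z) = (\<Sum>z\<in>X. if z\<in>b then f z else 0)"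
      by (rule sum.cong) auto
    also have "\<dots> = sum f (X \<inter> b)" using assms(2) by (simp add: sum.inter_restrict)
    also have "X \<inter> b = b" using bX by blast
    finally show ?thesis by simp
  qed
  moreover have "(\<Sum>z\<in>X. of_nat (size (filter_mset (\<lambda>c. z \<in> c) (add_mset b B))) * f z)
     = (\<Sum>z\<in>X. (if z \<in> b then 1 else 0) * f z) + (\<Sum>z\<in>X. of_nat (size (filter_mset (\<lambda>c. z \<in> c) B)) * f z)"
    unfolding sum.distrib[symmetric] by (rule sum.cong) (auto simp: algebra_simps)
  ultimately show ?case using add by simp
qed

lemma td_fin: "transversal_design lam l s X B G \<Longrightarrow> finite X"
  unfolding transversal_design_def by (elim conjE) assumption

lemma td_part: "transversal_design lam l s X B G \<Longrightarrow> partition_on X G"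
  unfolding transversal_design_def by (elim conjE) assumption

lemma td_blk: "transversal_design lam l s X B G \<Longrightarrow> \<forall>b\<in>#B. b \<subseteq> X \<and> card b = l"
  unfolding transversal_design_def by (elim conjE) assumption

lemma td_l2: "transversal_design lam l s X B G \<Longrightarrow> l \<ge> 2"
  unfolding transversal_design_def by (elim conjE) assumption

lemma td_cX: "transversal_design lam l s X B G \<Longrightarrow> card X = l * s"
  unfolding transversal_design_def by (elim conjE) assumption

lemma td_cg: "transversal_design lam l s X B G \<Longrightarrow> \<forall>g\<in>G. card g = s"
  unfolding transversal_design_def by (elim conjE) assumption

lemma td_cG: "transversal_design lam l s X B G \<Longrightarrow> card G = l"
  unfolding transversal_design_def by (elim conjE) assumption

lemma td_pair: "transversal_design lam l s X B G \<Longrightarrow> \<forall>x\<in>X. \<forall>y\<in>X. x \<noteq> y \<longrightarrow>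
        ((\<exists>g\<in>G. x \<in> g \<and> y \<in> g) \<and> size (filter_mset (\<lambda>b. x \<in> b \<and> y \<in> b) B) = 0) \<or>
        (\<not> (\<exists>g\<in>G. x \<in> g \<and> y \<in> g) \<and> size (filter_mset (\<lambda>b. x \<in> b \<and> y \<in> b) B) = lam)"
  unfolding transversal_design_def by (elim conjE) assumption

lemma sum_card_const:
  assumes "\<forall>b\<in>#M. card b = l"
  shows "(\<Sum>b\<in>#M. card b) = size M * l"
  using assms by (induction M) auto

lemma point_eq:
  fixes f :: "'x \<Rightarrow> 'b::comm_semiring_1"
  assumes TD: "transversal_design lam l s X B G" and g0: "g0 \<in> G" "x \<in> g0"
  shows "(\<Sum>b\<in>#filter_mset (\<lambda>b. x \<in> b) B. \<Sum>z\<in>b. f z)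
     = of_nat (size (filter_mset (\<lambda>b. x \<in> b) B)) * f x + of_nat lam * (\<Sum>z\<in>X - g0. f z)"
proof -
  have fin: "finite X" using td_fin[OF TD] .
  have part: "partition_on X G" using td_part[OF TD] .
  have blk: "\<forall>b\<in>#B. b \<subseteq> X \<and> card b = l" using td_blk[OF TD] .
  have pair: "\<forall>x\<in>X. \<forall>y\<in>X. x \<noteq> y \<longrightarrow>
        ((\<exists>g\<in>G. x \<in> g \<and> y \<in> g) \<and> size (filter_mset (\<lambda>b. x \<in> b \<and> y \<in> b) B) = 0) \<or>
        (\<not> (\<exists>g\<in>G. x \<in> g \<and> y \<in> g) \<and> size (filter_mset (\<lambda>b. x \<in> b \<and> y \<in> b) B) = lam)"
    using td_pair[OF TD] .
  have UG: "\<Union>G = X" using partition_onD1[OF part] by simp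
  have dis: "disjoint G" using partition_onD2[OF part] .
  have uniqG: "g = g'" if "g \<in> G" "g' \<in> G" "u \<in> g" "u \<in> g'" for g g' u
  proof (rule ccontr)
    assume "g \<noteq> g'"
    hence "g \<inter> g' = {}" using disjointD[OF dis that(1,2)] by blast
    thus False using that(3,4) by blast
  qed
  have g0X: "g0 \<subseteq> X" using UG g0 by blast
  have xX: "x \<in> X" using g0X g0 by blast
  define cnt where "cnt z = size (filter_mset (\<lambda>b. z \<in> b) (filter_mset (\<lambda>b. x \<in> b) B))" for z
  have cnt_eq: "cnt z = size (filter_mset (\<lambda>b. x \<in> b \<and> z \<in> b) B)" for z
    unfolding cnt_def filter_filter_mset ..
  have "(\<Sum>b\<in>#filter_mset (\<lambda>b. x \<in> b) B. \<Sum>z\<in>b. f z) = (\<Sum>z\<in>X. of_nat (cnt z) * f z)"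
    unfolding cnt_def by (rule swap_count) (use blk fin in auto)
  also have "\<dots> = (\<Sum>z\<in>g0. of_nat (cnt z) * f z) + (\<Sum>z\<in>X - g0. of_nat (cnt z) * f z)"
    using sum.subset_diff[OF g0X fin] by (simp add: add.commute)
  also have "(\<Sum>z\<in>g0. of_nat (cnt z) * f z) = of_nat (cnt x) * f x + (\<Sum>z\<in>g0 - {x}. of_nat (cnt z) * f z)"
    using sum.remove[OF finite_subset[OF g0X fin] g0(2)] .
  also have "(\<Sum>z\<in>g0 - {x}. of_nat (cnt z) * f z) = 0"
  proof (rule sum.neutral, rule ballI)
    fix z assume z: "z \<in> g0 - {x}"
    hence zX: "z \<in> X" using g0X by blast
    have xz: "x \<noteq> z" using z by blast
    have ex: "\<exists>g\<in>G. x \<in> g \<and> z \<in> g" using z g0 by blast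
    have "cnt z = 0" using pair[rule_format, OF xX zX xz] ex unfolding cnt_eq by argo
    thus "of_nat (cnt z) * f z = 0" by simp
  qed
  also have "(\<Sum>z\<in>X - g0. of_nat (cnt z) * f z) = (\<Sum>z\<in>X - g0. of_nat lam * f z)"
  proof (rule sum.cong[OF refl])
    fix z assume z: "z \<in> X - g0"
    have "\<not> (\<exists>g\<in>G. x \<in> g \<and> z \<in> g)"
    proof
      assume "\<exists>g\<in>G. x \<in> g \<and> z \<in> g"
      then obtain g where gG: "g \<in> G" and xg: "x \<in> g" and "z \<in> g" by blast
      have "g = g0" by (rule uniqG[OF gG g0(1) xg g0(2)])
      thus False using z \<open>z \<in> g\<close> by blast
    qed
    moreover have "x \<noteq> z" using z g0 by blast
    moreover have zX: "z \<in> X" using z by blast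
    ultimately have "cnt z = lam" using pair[rule_format, OF xX zX] unfolding cnt_eq by argo
    thus "of_nat (cnt z) * f z = of_nat lam * f z" by simp
  qed
  also have "cnt x = size (filter_mset (\<lambda>b. x \<in> b) B)" unfolding cnt_eq by simp
  finally show ?thesis by (simp add: sum_distrib_left)
qed

lemma r_eq:
  assumes TD: "transversal_design lam l s X B G" and g0: "g0 \<in> G" "x \<in> g0"
  shows "size (filter_mset (\<lambda>b. x \<in> b) B) = lam * s"
proof -
  have fin: "finite X" using td_fin[OF TD] .
  have part: "partition_on X G" using td_part[OF TD] .
  have l2: "l \<ge> 2" using td_l2[OF TD] .
  have blk: "\<forall>b\<in>#B. b \<subseteq> X \<and> card b = l" using td_blk[OF TD] .
  have cX: "card X = l * s" using td_cX[OF TD] .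
  have cg: "\<forall>g\<in>G. card g = s" using td_cg[OF TD] .
  have g0X: "g0 \<subseteq> X" using partition_onD1[OF part] g0 by blast
  define r where "r = size (filter_mset (\<lambda>b. x \<in> b) B)"
  have "(\<Sum>b\<in>#filter_mset (\<lambda>b. x \<in> b) B. \<Sum>z\<in>b. (1::nat))
     = r * 1 + lam * (\<Sum>z\<in>X - g0. (1::nat))"
    using point_eq[OF TD g0, of "\<lambda>_. 1::nat"] unfolding r_def by simp
  moreover have "(\<Sum>b\<in>#filter_mset (\<lambda>b. x \<in> b) B. \<Sum>z\<in>b. (1::nat)) = r * l"
    unfolding r_def using sum_card_const[of "filter_mset (\<lambda>b. x \<in> b) B" l] blk by simp
  moreover have "(\<Sum>z\<in>X - g0. (1::nat)) = l * s - s"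
    using card_Diff_subset[OF finite_subset[OF g0X fin] g0X] cX cg g0 by simp
  ultimately have e: "r * l = r + lam * (l * s - s)" by simp
  obtain k where k: "l = Suc k" using l2 by (cases l) auto
  have k1: "k > 0" using l2 k by simp
  have "Suc k * s - s = k * s" by simp
  hence "r * Suc k = r + lam * (k * s)" using e k by simp
  hence "r * k = (lam * s) * k" by (simp add: algebra_simps)
  hence "r = lam * s" using k1 by simp
  thus ?thesis unfolding r_def .
qed

lemma sum_mset_zero:
  assumes "\<forall>b\<in>#M. h b = (0::'b::comm_monoid_add)"
  shows "(\<Sum>b\<in>#M. h b) = 0"
  using assms by (induction M) auto

lemma const_on_group:
  fixes c :: "'x \<Rightarrow> 'a::{field,finite}"
  assumes TD: "transversal_design lam l s X B G"
    and q: "prime p" "card (UNIV :: 'a set) = p ^ e"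
    and ndvd: "\<not> p dvd lam * s"
    and c: "c \<in> design_code X B" and g0: "g0 \<in> G" "x \<in> g0" "y \<in> g0"
  shows "c x = c y"
proof -
  have bs: "\<forall>b\<in>#B. (\<Sum>z\<in>b. c z) = 0" using c unfolding design_code_def by blast
  have E: "0 = of_nat (lam * s) * c u + of_nat lam * (\<Sum>z\<in>X - g0. c z)" if "u \<in> g0" for u
  proof -
    have "(\<Sum>b\<in>#filter_mset (\<lambda>b. u \<in> b) B. \<Sum>z\<in>b. c z) = 0"
      by (rule sum_mset_zero) (use bs in auto)
    thus ?thesis using point_eq[OF TD g0(1) that, of c] r_eq[OF TD g0(1) that] by simp
  qed
  define t where "t = of_nat lam * (\<Sum>z\<in>X - g0. c z)"
  define k :: 'a where "k = of_nat (lam * s)"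
  have "k * c x + t = k * c y + t"
    using E[OF g0(2)] E[OF g0(3)] unfolding t_def k_def by simp
  hence "k * c x = k * c y" by (rule add_right_imp_eq)
  moreover have "k \<noteq> 0" unfolding k_def by (rule char_ok[OF q ndvd])
  ultimately show ?thesis by simp
qed

lemma fsum_apply: "finite A \<Longrightarrow> (sum f A) x = (\<Sum>a\<in>A. f a x)"
  by (induct rule: finite_induct) auto

lemma vs_fun: "vector_space (fscale :: 'a::field \<Rightarrow> ('x \<Rightarrow> 'a) \<Rightarrow> _)"
  by unfold_locales (auto simp: algebra_simps fun_eq_iff)

theorem mainTheorem2:
  fixes X :: "'x set" and B :: "'x set multiset" and G :: "'x set set"
    and lam l s p e :: nat
  assumes TD: "transversal_design lam l s X B G"
    and q: "prime p" "card (UNIV :: 'a set) = p ^ e"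
    and ndvd: "\<not> p dvd lam * s"
  shows "design_code X B \<subseteq>
           {c :: 'x \<Rightarrow> 'a::{field,finite}. (\<forall>x. x \<notin> X \<longrightarrow> c x = 0) \<and> (\<forall>g\<in>G. restrict c g \<in> rep_code g)}
         \<and> vector_space.dim (fscale :: 'a \<Rightarrow> ('x \<Rightarrow> 'a) \<Rightarrow> _) (design_code X B :: ('x \<Rightarrow> 'a) set) \<le> l"
proof
  have fin: "finite X" using td_fin[OF TD] .
  have part: "partition_on X G" using td_part[OF TD] .
  have cG: "card G = l" using td_cG[OF TD] .
  have UG: "\<Union>G = X" using partition_onD1[OF part] by simp
  have dis: "disjoint G" using partition_onD2[OF part] .
  have ne: "{} \<notin> G" using partition_onD3[OF part] .
  have finG: "finite G" using fin UG by (metis finite_UnionD)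
  have uniq: "g = g'" if "g \<in> G" "g' \<in> G" "x \<in> g" "x \<in> g'" for g g' x
  proof (rule ccontr)
    assume "g \<noteq> g'"
    hence "g \<inter> g' = {}" using disjointD[OF dis that(1,2)] by blast
    thus False using that(3,4) by blast
  qed
  show "design_code X B \<subseteq>
           {c :: 'x \<Rightarrow> 'a. (\<forall>x. x \<notin> X \<longrightarrow> c x = 0) \<and> (\<forall>g\<in>G. restrict c g \<in> rep_code g)}"
  proof
    fix c :: "'x \<Rightarrow> 'a" assume c: "c \<in> design_code X B"
    have z: "\<forall>x. x \<notin> X \<longrightarrow> c x = 0" using c unfolding design_code_def by blast
    have "restrict c g \<in> rep_code g" if g: "g \<in> G" for g
    proof -
      obtain x0 where x0: "x0 \<in> g" using ne g by (metis all_not_in_conv)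
      have "\<forall>t\<in>g. restrict c g t = c x0"
        using const_on_group[OF TD q ndvd c g _ x0] by simp
      thus ?thesis unfolding rep_code_def by auto
    qed
    with z show "c \<in> {c :: 'x \<Rightarrow> 'a. (\<forall>x. x \<notin> X \<longrightarrow> c x = 0) \<and> (\<forall>g\<in>G. restrict c g \<in> rep_code g)}"
      by blast
  qed
  interpret V: vector_space "fscale :: 'a \<Rightarrow> ('x \<Rightarrow> 'a) \<Rightarrow> _" by (rule vs_fun)
  define ind where "ind g = (\<lambda>x. if x \<in> g then (1::'a) else 0)" for g :: "'x set"
  define rep where "rep g = (SOME t. t \<in> g)" for g :: "'x set"
  have rep: "rep g \<in> g" if "g \<in> G" for g
    unfolding rep_def using ne that by (metis all_not_in_conv someI_ex)
  have "design_code X B \<subseteq> V.span (ind ` G)"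
  proof
    fix c :: "'x \<Rightarrow> 'a" assume c: "c \<in> design_code X B"
    have z: "\<forall>x. x \<notin> X \<longrightarrow> c x = 0" using c unfolding design_code_def by blast
    have eq: "c = (\<Sum>g\<in>G. fscale (c (rep g)) (ind g))"
    proof
      fix x
      have "(\<Sum>g\<in>G. fscale (c (rep g)) (ind g)) x = (\<Sum>g\<in>G. c (rep g) * ind g x)"
        using finG by (simp add: fsum_apply)
      also have "\<dots> = c x"
      proof (cases "x \<in> X")
        case True
        then obtain g0 where g0: "g0 \<in> G" "x \<in> g0" using UG by blast
        have "(\<Sum>g\<in>G. c (rep g) * ind g x) = (\<Sum>g\<in>G. if g = g0 then c (rep g) else 0)"
          by (rule sum.cong) (use uniq g0 in \<open>auto simp: ind_def\<close>)
        also have "\<dots> = c (rep g0)" using finG g0 by simp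
        also have "\<dots> = c x" using const_on_group[OF TD q ndvd c g0(1) rep[OF g0(1)] g0(2)] .
        finally show ?thesis .
      next
        case False
        hence "\<forall>g\<in>G. ind g x = 0" using UG unfolding ind_def by auto
        thus ?thesis using False z by simp
      qed
      finally show "c x = (\<Sum>g\<in>G. fscale (c (rep g)) (ind g)) x" by simp
    qed
    have "(\<Sum>g\<in>G. fscale (c (rep g)) (ind g)) \<in> V.span (ind ` G)"
      by (intro V.span_sum V.span_scale V.span_base) auto
    thus "c \<in> V.span (ind ` G)" using eq by simp
  qed
  hence "V.dim (design_code X B) \<le> card (ind ` G)"
    using V.dim_le_card finG by blast
  also have "\<dots> \<le> l" using card_image_le[OF finG, of ind] cG by simp
  finally show "V.dim (design_code X B :: ('x \<Rightarrow> 'a) set) \<le> l" .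
qed

end
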